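(* Let $X$ be a (real or complex) Banach space, $S$ a Hausdorff topological space, and $J\colon X\to C^{b}(S)$ a nice embedding (see context). Then for every $T\in L(X)$ there is a scalar $\lambda$ with $|\lambda|=1$ such that $\lambda T$ satisfies the Daugavet equation $\|\mathrm{Id}+\lambda T\|=1+\|\lambda T\|$.
   Context: $C^{b}(S)$ denotes the sup-normed Banach space of bounded continuous scalar-valued functions on $S$, and $\delta_s$ the functional $f\mapsto f(s)$. A closed subspace $F$ of a Banach space $E$ is an $L$-summand if there is a projection $\Pi$ of $E$ onto $F$ with $\|\xi\|=\|\Pi\xi\|+\|\xi-\Pi\xi\|$ for all $\xi\in E$. A linear map $J\colon X\to C^b(S)$ is a nice embedding if $J$ is an isometry and for every $s\in S$: (N1) $p_s:=J^*(\delta_s)$ satisfies $\|p_s\|=1$; (N2) $\operatorname{lin}\{p_s\}$ is an $L$-summand in $X^*$. $L(X)$ denotes the bounded linear operators on $X$. *)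

theory Defs
  imports "HOL-Analysis.Analysis"
begin

text \<open>A Banach space over K is a real Banach space (type class banach)
  together with a scalar multiplication by elements of K extending the real one,
  satisfying the module laws and absolute homogeneity of the norm.\<close>

definition scalar_field :: "complex set \<Rightarrow> bool" where
  "scalar_field K \<longleftrightarrow> K = \<real> \<or> K = UNIV"

definition banach_over :: "complex set \<Rightarrow> (complex \<Rightarrow> 'a::banach \<Rightarrow> 'a) \<Rightarrow> bool" where
  "banach_over K sm \<longleftrightarrow>
     (\<forall>r::real. \<forall>x. sm (of_real r) x = r *\<^sub>R x) \<and>
     (\<forall>c\<in>K. \<forall>d\<in>K. \<forall>x y.
        sm c (x + y) = sm c x + sm c y \<and>
        sm (c + d) x = sm c x + sm d x \<and>
        sm (c * d) x = sm c (sm d x) \<and>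
        norm (sm c x) = cmod c * norm x)"

definition bounded_operator :: "complex set \<Rightarrow> (complex \<Rightarrow> 'a::banach \<Rightarrow> 'a) \<Rightarrow> ('a \<Rightarrow> 'a) \<Rightarrow> bool" where
  "bounded_operator K sm T \<longleftrightarrow> bounded_linear T \<and> (\<forall>c\<in>K. \<forall>x. T (sm c x) = sm c (T x))"

definition dual_space :: "complex set \<Rightarrow> (complex \<Rightarrow> 'a::banach \<Rightarrow> 'a) \<Rightarrow> ('a \<Rightarrow> complex) set" where
  "dual_space K sm = {f. bounded_linear f \<and> (\<forall>c\<in>K. \<forall>x. f (sm c x) = c * f x) \<and> (\<forall>x. f x \<in> K)}"

definition L_summand_dual :: "complex set \<Rightarrow> (complex \<Rightarrow> 'a::banach \<Rightarrow> 'a) \<Rightarrow> ('a \<Rightarrow> complex) set \<Rightarrow> bool" where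
  "L_summand_dual K sm F \<longleftrightarrow>
     (let D = dual_space K sm in
       F \<subseteq> D \<and> (\<lambda>x. 0) \<in> F \<and>
       (\<forall>f\<in>F. \<forall>g\<in>F. (\<lambda>x. f x + g x) \<in> F) \<and>
       (\<forall>c\<in>K. \<forall>f\<in>F. (\<lambda>x. c * f x) \<in> F) \<and>
       (\<forall>\<xi>\<in>D. (\<forall>e>0. \<exists>\<eta>\<in>F. onorm (\<lambda>x. \<xi> x - \<eta> x) < e) \<longrightarrow> \<xi> \<in> F) \<and>
       (\<exists>P. (\<forall>\<xi>\<in>D. P \<xi> \<in> F) \<and> (\<forall>\<eta>\<in>F. P \<eta> = \<eta>) \<and>
            (\<forall>\<xi>\<in>D. \<forall>\<eta>\<in>D. P (\<lambda>x. \<xi> x + \<eta> x) = (\<lambda>x. P \<xi> x + P \<eta> x)) \<and>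
            (\<forall>c\<in>K. \<forall>\<xi>\<in>D. P (\<lambda>x. c * \<xi> x) = (\<lambda>x. c * P \<xi> x)) \<and>
            (\<forall>\<xi>\<in>D. onorm \<xi> = onorm (P \<xi>) + onorm (\<lambda>x. \<xi> x - P \<xi> x))))"

text \<open>Nice embedding J : X \<rightarrow> C^b(S) (K-valued bounded continuous functions, sup norm).
  p_s = J^*(delta_s) is the functional x \<mapsto> (J x)(s).\<close>
definition nice_embedding ::
  "complex set \<Rightarrow> (complex \<Rightarrow> 'a::banach \<Rightarrow> 'a) \<Rightarrow> ('a \<Rightarrow> ('s::topological_space \<Rightarrow>\<^sub>C complex)) \<Rightarrow> bool" where
  "nice_embedding K sm J \<longleftrightarrow>
     (\<forall>x s. apply_bcontfun (J x) s \<in> K) \<and>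
     (\<forall>x y. J (x + y) = J x + J y) \<and>
     (\<forall>c\<in>K. \<forall>x s. apply_bcontfun (J (sm c x)) s = c * apply_bcontfun (J x) s) \<and>
     (\<forall>x. norm (J x) = norm x) \<and>
     (\<forall>s. onorm (\<lambda>x. apply_bcontfun (J x) s) = 1 \<and>
          L_summand_dual K sm {(\<lambda>x. c * apply_bcontfun (J x) s) | c. c \<in> K})"

end

theory Submission
  imports Defs
begin

lemma onorm_scale_gen:
  fixes f :: "'a::real_normed_vector \<Rightarrow> 'b::real_normed_vector"
    and g :: "'a \<Rightarrow> 'c::real_normed_vector"
  assumes f: "bounded_linear f" and g: "bounded_linear g" and a: "0 \<le> a"
    and n: "\<And>x. norm (g x) = a * norm (f x)"
  shows "onorm g = a * onorm f"
proof (rule antisym)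
  show "onorm g \<le> a * onorm f"
  proof (rule onorm_bound)
    show "0 \<le> a * onorm f" using a onorm_pos_le[OF f] by simp
    fix x show "norm (g x) \<le> a * onorm f * norm x"
      using n[of x] onorm[OF f, of x] a by (simp add: mult_left_mono mult.assoc)
  qed
next
  show "a * onorm f \<le> onorm g"
  proof (cases "a = 0")
    case True then show ?thesis using onorm_pos_le[OF g] by simp
  next
    case False
    then have ap: "a > 0" using a by simp
    have "onorm f \<le> onorm g / a"
    proof (rule onorm_bound)
      show "0 \<le> onorm g / a" using ap onorm_pos_le[OF g] by simp
      fix x
      have "a * norm (f x) \<le> onorm g * norm x" using n[of x] onorm[OF g, of x] by simp
      then show "norm (f x) \<le> onorm g / a * norm x" using ap
        by (simp add: field_simps)
    qed
    then show ?thesis using ap by (simp add: field_simps)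
  qed
qed

lemma onorm_cmult:
  fixes f :: "'a::real_normed_vector \<Rightarrow> complex"
  assumes f: "bounded_linear f"
  shows "onorm (\<lambda>x. c * f x) = cmod c * onorm f"
proof (rule onorm_scale_gen[OF f])
  show "bounded_linear (\<lambda>x. c * f x)"
    using bounded_linear_compose[OF bounded_linear_mult_right f] by simp
qed (auto simp: norm_mult)

theorem corollary2p2:
  fixes K :: "complex set"
    and sm :: "complex \<Rightarrow> 'a::banach \<Rightarrow> 'a"
    and J :: "'a \<Rightarrow> ('s::t2_space \<Rightarrow>\<^sub>C complex)"
    and T :: "'a \<Rightarrow> 'a"
  assumes "scalar_field K"
    and "banach_over K sm"
    and "nice_embedding K sm J"
    and "bounded_operator K sm T"
  shows "\<exists>l\<in>K. cmod l = 1 \<and>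
           onorm (\<lambda>x. x + sm l (T x)) = 1 + onorm (\<lambda>x. sm l (T x))"
proof -
  have Kc: "K = \<real> \<or> K = UNIV" using assms(1) by (simp add: scalar_field_def)
  have K_real: "of_real r \<in> K" for r using Kc by auto
  have K_one: "1 \<in> K" using K_real[of 1] by simp
  have K_add: "a + b \<in> K" if "a \<in> K" "b \<in> K" for a b using Kc that by auto
  have K_diff: "a - b \<in> K" if "a \<in> K" "b \<in> K" for a b using Kc that by auto
  have K_mult: "a * b \<in> K" if "a \<in> K" "b \<in> K" for a b using Kc that by auto
  have K_unit: "cnj c / of_real (cmod c) \<in> K" if "c \<in> K" for c
    using Kc that by (auto simp: Reals_cnj_iff)
  have K_closed: "closed K" using Kc closed_complex_Reals by auto
  have smR: "\<forall>r::real. \<forall>x. sm (of_real r) x = r *\<^sub>R x"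
    and smK: "\<forall>c\<in>K. \<forall>d\<in>K. \<forall>x y. sm c (x + y) = sm c x + sm c y \<and>
        sm (c + d) x = sm c x + sm d x \<and> sm (c * d) x = sm c (sm d x) \<and>
        norm (sm c x) = cmod c * norm x"
    using assms(2) unfolding banach_over_def by blast+
  have sm_lin: "bounded_linear (sm l)" if l: "l \<in> K" for l
  proof (rule bounded_linear_intro)
    fix x y show "sm l (x + y) = sm l x + sm l y" using smK l by blast
  next
    fix r x
    have "sm l (r *\<^sub>R x) = sm l (sm (of_real r) x)" using smR by simp
    also have "\<dots> = sm (l * of_real r) x" using smK l K_real by metis
    also have "\<dots> = sm (of_real r * l) x" by (simp add: mult.commute)
    also have "\<dots> = sm (of_real r) (sm l x)" using smK l K_real by metis
    also have "\<dots> = r *\<^sub>R sm l x" using smR by simp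
    finally show "sm l (r *\<^sub>R x) = r *\<^sub>R sm l x" .
  next
    fix x show "norm (sm l x) \<le> norm x * cmod l" using smK l K_one
      by (metis mult.commute order_refl)
  qed
  have sm_norm: "norm (sm l x) = cmod l * norm x" if "l \<in> K" for l x
    using smK that by blast
  have Tlin: "bounded_linear T" and Tcomm: "\<forall>c\<in>K. \<forall>x. T (sm c x) = sm c (T x)"
    using assms(4) unfolding bounded_operator_def by blast+
  have smT_lin: "bounded_linear (\<lambda>x. sm l (T x))" if "l \<in> K" for l
    using bounded_linear_compose[OF sm_lin[OF that] Tlin] by simp
  have smT_norm: "onorm (\<lambda>x. sm l (T x)) = cmod l * onorm T" if "l \<in> K" for l
    by (rule onorm_scale_gen[OF Tlin smT_lin[OF that]]) (auto simp: sm_norm[OF that])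
  have A_lin: "bounded_linear (\<lambda>x. x + sm l (T x))" if "l \<in> K" for l
    using bounded_linear_add[OF bounded_linear_ident smT_lin[OF that]] by simp
  define f where "f l = onorm (\<lambda>x. x + sm l (T x))" for l
  define C where "C = K \<inter> sphere 0 1"
  have C_comp: "compact C" unfolding C_def using K_closed by auto
  have C_ne: "C \<noteq> {}" unfolding C_def using K_one by auto
  have f_upper: "f l \<le> 1 + onorm T" if "l \<in> C" for l
  proof -
    have lK: "l \<in> K" and l1: "cmod l = 1" using that by (auto simp: C_def)
    have "f l \<le> onorm (\<lambda>x::'a. x) + onorm (\<lambda>x. sm l (T x))" unfolding f_def
      using onorm_triangle[OF bounded_linear_ident smT_lin[OF lK]] by simp
    also have "\<dots> \<le> 1 + onorm T" using smT_norm[OF lK] l1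
      onorm_bound[of 1 "\<lambda>x::'a. x"] by simp
    finally show ?thesis .
  qed
  have f_lip: "lipschitz_on (onorm T) C f"
  proof (rule lipschitz_onI)
    show "0 \<le> onorm T" by (rule onorm_pos_le[OF Tlin])
    have half: "f l \<le> f l' + onorm T * dist l l'" if "l \<in> C" "l' \<in> C" for l l'
    proof -
      have lK: "l \<in> K" and l'K: "l' \<in> K" using that by (auto simp: C_def)
      have dK: "l - l' \<in> K" by (rule K_diff[OF lK l'K])
      have eq: "(\<lambda>x. x + sm l (T x)) = (\<lambda>x. (x + sm l' (T x)) + sm (l - l') (T x))"
      proof
        fix x
        have "sm l (T x) = sm ((l - l') + l') (T x)" by simp
        also have "\<dots> = sm (l - l') (T x) + sm l' (T x)" using smK dK l'K by blast
        finally show "x + sm l (T x) = (x + sm l' (T x)) + sm (l - l') (T x)" by simp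
      qed
      have "f l \<le> f l' + onorm (\<lambda>x. sm (l - l') (T x))" unfolding f_def eq
        using onorm_triangle[OF A_lin[OF l'K] smT_lin[OF dK]] by simp
      also have "\<dots> = f l' + onorm T * dist l l'" using smT_norm[OF dK]
        by (simp add: dist_norm mult.commute)
      finally show ?thesis .
    qed
    fix x y assume "x \<in> C" "y \<in> C"
    then show "dist (f x) (f y) \<le> onorm T * dist x y"
      using half[of x y] half[of y x] by (simp add: dist_real_def dist_commute abs_le_iff)
  qed
  have f_cont: "continuous_on C f" by (rule lipschitz_on_continuous_on[OF f_lip])
  obtain l0 where l0C: "l0 \<in> C" and l0max: "\<forall>y\<in>C. f y \<le> f l0"
    using continuous_attains_sup[OF C_comp C_ne f_cont] by blast
  have f_lower: "\<exists>l\<in>C. f l > 1 + onorm T - e" if e: "e > 0" for e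
  proof -
  have Jv: "\<forall>x s. apply_bcontfun (J x) s \<in> K"
    and Jadd: "\<forall>x y. J (x + y) = J x + J y"
    and Jsm: "\<forall>c\<in>K. \<forall>x s. apply_bcontfun (J (sm c x)) s = c * apply_bcontfun (J x) s"
    and Jn: "\<forall>x. norm (J x) = norm x"
    and Js: "\<forall>s. onorm (\<lambda>x. apply_bcontfun (J x) s) = 1 \<and>
          L_summand_dual K sm {(\<lambda>x. c * apply_bcontfun (J x) s) | c. c \<in> K}"
    using assms(3) unfolding nice_embedding_def by blast+
  define D where "D = dual_space K sm"
  define p where "p s = (\<lambda>x. apply_bcontfun (J x) s)" for s
  define \<xi> where "\<xi> s = (\<lambda>x. apply_bcontfun (J (T x)) s)" for s
  have LS: "L_summand_dual K sm {(\<lambda>x. c * p s x) | c. c \<in> K}" for s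
    using Js unfolding p_def by blast
  have pn: "onorm (p s) = 1" for s using Js unfolding p_def by blast
  have pD: "p s \<in> D" for s
  proof -
    have "(\<lambda>x. 1 * p s x) \<in> {(\<lambda>x. c * p s x) | c. c \<in> K}" using K_one by blast
    then show ?thesis using LS[of s] unfolding L_summand_dual_def Let_def D_def by auto
  qed
  have p_lin: "bounded_linear (p s)" for s using pD unfolding D_def dual_space_def by blast
  have p_add: "p s (x + y) = p s x + p s y" for s x y
    unfolding p_def using Jadd by (simp add: plus_bcontfun.rep_eq)
  have p_sm: "p s (sm c x) = c * p s x" if "c \<in> K" for s c x
    unfolding p_def using Jsm that by blast
  have \<xi>_eq: "\<xi> s = p s \<circ> T" for s unfolding \<xi>_def p_def by auto
  have \<xi>_lin: "bounded_linear (\<xi> s)" for s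
    unfolding \<xi>_eq using bounded_linear_compose[OF p_lin Tlin] by (simp add: o_def)
  have \<xi>D: "\<xi> s \<in> D" for s
    unfolding D_def dual_space_def using \<xi>_lin[of s] Tcomm p_sm Jv
    by (auto simp: \<xi>_def p_def)
  have ex_s: "\<exists>s. onorm (\<xi> s) > onorm T - e"
  proof (rule ccontr)
    assume "\<not> ?thesis"
    then have le: "onorm (\<xi> s) \<le> onorm T - e" for s by (meson not_less)
    have "onorm T \<le> onorm T - e"
    proof (rule onorm_bound)
      show "0 \<le> onorm T - e" using le onorm_pos_le[OF \<xi>_lin] by (meson order_trans)
      fix x
      have "norm (J (T x)) \<le> (onorm T - e) * norm x"
      proof (rule norm_bound)
        fix s
        have "norm (apply_bcontfun (J (T x)) s) = norm (\<xi> s x)" by (simp add: \<xi>_def)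
        also have "\<dots> \<le> onorm (\<xi> s) * norm x" by (rule onorm[OF \<xi>_lin])
        also have "\<dots> \<le> (onorm T - e) * norm x" by (rule mult_right_mono[OF le]) simp
        finally show "norm (apply_bcontfun (J (T x)) s) \<le> (onorm T - e) * norm x" .
      qed
      then show "norm (T x) \<le> (onorm T - e) * norm x" using Jn by simp
    qed
    then show False using e by simp
  qed
  then obtain s where s: "onorm (\<xi> s) > onorm T - e" by blast
  let ?F = "{(\<lambda>x. c * p s x) | c. c \<in> K}"
  obtain P where PF: "\<forall>\<xi>\<in>D. P \<xi> \<in> ?F" and Pid: "\<forall>\<eta>\<in>?F. P \<eta> = \<eta>"
    and Padd: "\<forall>\<xi>\<in>D. \<forall>\<eta>\<in>D. P (\<lambda>x. \<xi> x + \<eta> x) = (\<lambda>x. P \<xi> x + P \<eta> x)"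
    and Psm: "\<forall>c\<in>K. \<forall>\<xi>\<in>D. P (\<lambda>x. c * \<xi> x) = (\<lambda>x. c * P \<xi> x)"
    and Pn: "\<forall>\<xi>\<in>D. onorm \<xi> = onorm (P \<xi>) + onorm (\<lambda>x. \<xi> x - P \<xi> x)"
    using LS[of s] unfolding L_summand_dual_def Let_def D_def[symmetric] by blast
  obtain c where cK: "c \<in> K" and Pxi: "P (\<xi> s) = (\<lambda>x. c * p s x)"
    using PF \<xi>D by blast
  have Pp: "P (p s) = p s"
  proof -
    have "(\<lambda>x. 1 * p s x) \<in> ?F" using K_one by blast
    then show ?thesis using Pid by simp
  qed
  define \<eta> where "\<eta> = (\<lambda>x. \<xi> s x - c * p s x)"
  have \<eta>_lin: "bounded_linear \<eta>" unfolding \<eta>_def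
    by (rule bounded_linear_sub[OF \<xi>_lin bounded_linear_compose[OF bounded_linear_mult_right p_lin]])
  have n\<xi>: "onorm (\<xi> s) = cmod c + onorm \<eta>"
    using Pn \<xi>D[of s] Pxi onorm_cmult[OF p_lin, of c s] pn unfolding \<eta>_def by simp
  define l where "l = (if c = 0 then 1 else cnj c / of_real (cmod c))"
  have lK: "l \<in> K" using K_one K_unit[OF cK] by (simp add: l_def)
  have l1: "cmod l = 1" by (simp add: l_def norm_divide)
  have lc: "l * c = of_real (cmod c)"
  proof (cases "c = 0")
    case False
    have sq: "cnj c * c = of_real (cmod c) * of_real (cmod c)"
      using complex_norm_square[of c] by (simp add: power2_eq_square mult.commute)
    have "of_real (cmod c) \<noteq> (0::complex)" using False by simp
    then show ?thesis using False sq by (simp add: l_def)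
  qed (simp add: l_def)
  have lC: "l \<in> C" using lK l1 by (simp add: C_def)
  define \<phi> where "\<phi> = (\<lambda>x. p s x + l * \<xi> s x)"
  have lxD: "(\<lambda>x. l * \<xi> s x) \<in> D"
    unfolding D_def dual_space_def
    using bounded_linear_compose[OF bounded_linear_mult_right \<xi>_lin, of l s]
      \<xi>D[of s] lK K_mult
    by (auto simp: D_def dual_space_def o_def)
  have \<phi>D: "\<phi> \<in> D"
    unfolding D_def dual_space_def \<phi>_def
    using bounded_linear_add[OF p_lin bounded_linear_compose[OF bounded_linear_mult_right \<xi>_lin, of l s]]
      pD[of s] lxD K_add
    by (auto simp: D_def dual_space_def o_def algebra_simps)
  have P\<phi>: "P \<phi> = (\<lambda>x. (1 + l * c) * p s x)"
  proof -
    have "P \<phi> = (\<lambda>x. P (p s) x + P (\<lambda>x. l * \<xi> s x) x)"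
      unfolding \<phi>_def using bspec[OF bspec[OF Padd pD[of s]] lxD] by simp
    also have "\<dots> = (\<lambda>x. p s x + l * (c * p s x))"
      using Psm lK \<xi>D[of s] Pp Pxi by simp
    finally show ?thesis by (simp add: algebra_simps)
  qed
  have rest: "(\<lambda>x. \<phi> x - P \<phi> x) = (\<lambda>x. l * \<eta> x)"
    unfolding P\<phi> unfolding \<phi>_def \<eta>_def by (simp add: algebra_simps)
  have "onorm \<phi> = cmod (1 + l * c) * onorm (p s) + cmod l * onorm \<eta>"
    using Pn \<phi>D P\<phi> rest onorm_cmult[OF p_lin] onorm_cmult[OF \<eta>_lin] by simp
  also have "\<dots> = 1 + onorm (\<xi> s)"
  proof -
    have "cmod (1 + complex_of_real (cmod c)) = 1 + cmod c"
      by (metis abs_of_nonneg norm_ge_zero norm_of_real of_real_1 of_real_add add_nonneg_nonneg zero_le_one)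
    then show ?thesis using lc l1 pn n\<xi> by simp
  qed
  finally have n\<phi>: "onorm \<phi> = 1 + onorm (\<xi> s)" .
  have "\<phi> = p s \<circ> (\<lambda>x. x + sm l (T x))"
    unfolding \<phi>_def \<xi>_def using p_add p_sm[OF lK] by (auto simp: p_def)
  then have "onorm \<phi> \<le> onorm (p s) * f l"
    unfolding f_def by (metis onorm_compose[OF p_lin A_lin[OF lK]])
  then have "onorm \<phi> \<le> f l" using pn by simp
  then show ?thesis using lC n\<phi> s by force
  qed
  have "f l0 \<ge> 1 + onorm T"
  proof (rule field_le_epsilon)
    fix e :: real assume "e > 0"
    then obtain l where "l \<in> C" "f l > 1 + onorm T - e" using f_lower by blast
    then show "1 + onorm T \<le> f l0 + e" using l0max by force
  qed
  then have "f l0 = 1 + onorm T" using f_upper[OF l0C] by simp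
  moreover have "l0 \<in> K" "cmod l0 = 1" using l0C by (auto simp: C_def)
  ultimately show ?thesis using smT_norm unfolding f_def by auto
qed

end
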